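(* Let $p$ be an odd prime and let $\alpha$ be an indeterminate over $\mathbb F_p$. There is a unique polynomial $G^{(\alpha)}(X)\in\mathbb F_p(\alpha)[X]$ of degree less than $p$ such that \[ G^{(\alpha)}\bigl(L_{p-1}^{(\alpha)}(X)\bigr)\equiv X \pmod{X^p-(\alpha^p-\alpha)} \] in $\mathbb F_p(\alpha)[X]$, and it is given by \[ G^{(\alpha)}(X)=-\sum_{k=1}^{p-1}\frac{1}{k}\,\frac{X^{k}}{\prod_{s=1}^{k-1}b_{1,s}(\alpha)}, \] where the empty product (for $k=1$) equals $1$.
   Context: $p$ is an odd prime and $\mathbb F_p$ the field of $p$ elements. The (generalized Laguerre) polynomial $L_{p-1}^{(\alpha)}(X)\in\mathbb F_p[\alpha,X]$ is defined by $L_{p-1}^{(\alpha)}(X)=\sum_{k=0}^{p-1}\binom{\alpha-1}{p-1-k}\frac{(-X)^k}{k!}$, where $\binom{x}{m}=x(x-1)\cdots(x-m+1)/m!$. For integers $0<r,s<p$ (integers are freely interpreted as elements of $\mathbb F_p$), the polynomial $b_{r,s}(\alpha)\in\mathbb F_p[\alpha]$ is defined by $b_{r,s}(\alpha)=\sum_{k=0}^{p-1}(-r/s)^k\binom{r\alpha-1}{p-1-k}\binom{s\alpha-1}{k}$. *)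

theory Defs
  imports "Berlekamp_Zassenhaus.Finite_Field"
    "HOL-Computational_Algebra.Polynomial"
    "HOL-Computational_Algebra.Fraction_Field"
begin

text \<open>F_p is the type 'p mod_ring with CARD('p) = p prime; F_p[alpha] is 'p mod_ring poly,
  F_p(alpha) is ('p mod_ring poly) fract.\<close>

definition pbinom :: "'a::field poly \<Rightarrow> nat \<Rightarrow> 'a poly" where
  "pbinom x m = smult (inverse (of_nat (fact m))) (\<Prod>i<m. x - of_nat i)"

definition alpha :: "'a::field poly" where
  "alpha = [:0, 1:]"

text \<open>Coefficient of X^k in L_{p-1}^{(alpha)}(X): binom(alpha-1, p-1-k) (-1)^k / k!.\<close>
definition laguerre_coeff :: "nat \<Rightarrow> nat \<Rightarrow> 'a::field poly" where
  "laguerre_coeff p k = smult ((-1) ^ k * inverse (of_nat (fact k))) (pbinom (alpha - 1) (p - 1 - k))"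

definition laguerre :: "nat \<Rightarrow> ('a::field poly) fract poly" where
  "laguerre p = (\<Sum>k<p. monom (to_fract (laguerre_coeff p k)) k)"

definition bpoly :: "nat \<Rightarrow> nat \<Rightarrow> nat \<Rightarrow> 'a::field poly" where
  "bpoly p r s = (\<Sum>k<p. smult ((- (of_nat r / of_nat s)) ^ k)
      (pbinom (smult (of_nat r) alpha - 1) (p - 1 - k) * pbinom (smult (of_nat s) alpha - 1) k))"

definition Gpoly :: "nat \<Rightarrow> ('a::field poly) fract poly" where
  "Gpoly p = - (\<Sum>k=1..p-1. monom (inverse (of_nat k) *
       inverse (\<Prod>s=1..k-1. to_fract (bpoly p 1 s))) k)"

end

theory Submission imports Defs begin

type_synonym 'p F = "('p mod_ring poly) fract"

lemma tf_of_nat [simp]: "to_fract (of_nat n) = of_nat n"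
  by (induction n) auto

lemma tf_power [simp]: "to_fract (x ^ n) = to_fract x ^ n"
  by (induction n) auto

lemma tf_prod [simp]: "to_fract (prod f A) = (\<Prod>x\<in>A. to_fract (f x))"
  by (induction A rule: infinite_finite_induct) auto

definition emb :: "'p::prime_card mod_ring \<Rightarrow> 'p F" where "emb c = to_fract [:c:]"

lemma emb_add [simp]: "emb (x + y) = emb x + emb y"
  by (simp add: emb_def flip: to_fract_add)
lemma emb_mult [simp]: "emb (x * y) = emb x * emb y"
  by (simp add: emb_def flip: to_fract_mult)
lemma emb_uminus [simp]: "emb (- x) = - emb x"
  by (simp add: emb_def flip: to_fract_uminus)
lemma emb_diff [simp]: "emb (x - y) = emb x - emb y"
  by (simp add: emb_def flip: to_fract_diff)
lemma emb_0 [simp]: "emb 0 = 0" by (simp add: emb_def)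
lemma emb_1 [simp]: "emb 1 = 1" by (simp add: emb_def flip: one_pCons)
lemma emb_of_nat [simp]: "emb (of_nat n) = of_nat n"
  by (simp add: emb_def flip: of_nat_poly)
lemma emb_power [simp]: "emb (x ^ n) = emb x ^ n"
  by (induction n) auto
lemma emb_eq_iff [simp]: "emb x = emb y \<longleftrightarrow> x = y"
  by (simp add: emb_def)
lemma emb_eq_0_iff [simp]: "emb x = 0 \<longleftrightarrow> x = 0"
  by (simp add: emb_def)
lemma emb_inverse [simp]: "emb (inverse x) = inverse (emb x)"
proof (cases "x = 0")
  case True then show ?thesis by simp
next
  case False
  have "emb x * emb (inverse x) = 1" using False by (simp flip: emb_mult)
  then show ?thesis by (metis inverse_unique)
qed
lemma emb_divide [simp]: "emb (x / y) = emb x / emb y"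
  by (simp add: divide_inverse)
lemma tf_smult [simp]: "to_fract (smult c q) = emb c * to_fract q"
  by (simp add: emb_def flip: to_fract_mult)

lemma ofnat_F_eq_0: "(of_nat n :: 'p::prime_card F) = 0 \<longleftrightarrow> CARD('p) dvd n"
proof -
  have "(of_nat n :: 'p F) = 0 \<longleftrightarrow> emb (of_nat n :: 'p mod_ring) = 0" by (simp only: emb_of_nat)
  also have "\<dots> \<longleftrightarrow> (of_nat n :: 'p mod_ring) = 0" by (simp only: emb_eq_0_iff)
  also have "\<dots> \<longleftrightarrow> CARD('p) dvd n" by (simp add: of_nat_eq_0_iff_char_dvd)
  finally show ?thesis .
qed

lemma CHAR_F [simp]: "CHAR('p::prime_card F) = CARD('p)"
  by (rule CHAR_eq_posI) (auto simp: ofnat_F_eq_0 dest: dvd_imp_le)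

lemma card_ge2: "CARD('p::prime_card) \<ge> 2"
  using prime_card[where 'a='p] prime_ge_2_nat by blast

lemma mod_ring_fermat: "(x :: 'p::prime_card mod_ring) ^ CARD('p) = x"
  using finite_field_power_card_eq_same[of x] by simp

lemma mod_ring_fermat1: "(x :: 'p::prime_card mod_ring) \<noteq> 0 \<Longrightarrow> x ^ (CARD('p) - 1) = 1"
proof -
  assume x: "x \<noteq> 0"
  have "x ^ (CARD('p) - 1) * x = x ^ CARD('p)"
    using card_ge2[where 'p='p] by (simp flip: power_Suc2)
  then have "x ^ (CARD('p) - 1) * x = 1 * x" by (simp add: mod_ring_fermat)
  then show ?thesis using x by simp
qed

lemma F_fermat_nat: "(of_nat n :: 'p::prime_card F) ^ CARD('p) = of_nat n"
proof -
  have "(of_nat n :: 'p F) = emb (of_nat n)" by simp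
  then show ?thesis by (metis emb_power mod_ring_fermat)
qed

lemma F_fermat1_nat: "\<not> CARD('p) dvd n \<Longrightarrow> (of_nat n :: 'p::prime_card F) ^ (CARD('p) - 1) = 1"
proof -
  assume n: "\<not> CARD('p) dvd n"
  then have "(of_nat n :: 'p mod_ring) \<noteq> 0" by (simp add: of_nat_eq_0_iff_char_dvd)
  then have "(of_nat n :: 'p mod_ring) ^ (CARD('p) - 1) = 1" by (rule mod_ring_fermat1)
  then have "emb ((of_nat n :: 'p mod_ring) ^ (CARD('p) - 1)) = 1" by simp
  then show ?thesis by simp
qed

lemma F_of_nat_inj: "i < CARD('p) \<Longrightarrow> j < CARD('p) \<Longrightarrow> (of_nat i :: 'p::prime_card F) = of_nat j \<Longrightarrow> i = j"
proof -
  assume ij: "i < CARD('p)" "j < CARD('p)" "(of_nat i :: 'p::prime_card F) = of_nat j"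
  show "i = j"
  proof (rule ccontr)
    assume "i \<noteq> j"
    then consider "i < j" | "j < i" by linarith
    then show False
    proof cases
      case 1
      then have "CARD('p) dvd (j - i)" using ij of_nat_eq_iff_char_dvd[OF 1, where 'a="'p F"] by simp
      then show False using 1 ij by (simp add: nat_dvd_not_less)
    next
      case 2
      then have "CARD('p) dvd (i - j)" using ij of_nat_eq_iff_char_dvd[OF 2, where 'a="'p F"] by simp
      then show False using 2 ij by (simp add: nat_dvd_not_less)
    qed
  qed
qed

lemma emb_sum [simp]: "emb (sum f A) = (\<Sum>x\<in>A. emb (f x))"
  by (induction A rule: infinite_finite_induct) auto

definition fb :: "'a::field \<Rightarrow> nat \<Rightarrow> 'a" where
  "fb x m = inverse (of_nat (fact m)) * (\<Prod>i<m. x - of_nat i)"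

lemma fb_0 [simp]: "fb x 0 = 1" by (simp add: fb_def)

lemma fb_Suc: "fb x (Suc m) = fb x m * (x - of_nat m) * inverse (of_nat (Suc m))"
  unfolding fb_def by (simp only: fact_Suc of_nat_id of_nat_mult inverse_mult_distrib prod.lessThan_Suc mult_ac)

lemma tf_pbinom: "to_fract (pbinom (x :: 'p::prime_card mod_ring poly) m) = fb (to_fract x) m"
  by (simp add: pbinom_def fb_def)

lemma poly_pbinom: "poly (pbinom x m) c = fb (poly x c) m"
  by (simp add: pbinom_def fb_def poly_prod of_nat_poly)

lemma prod_neg: "(\<Prod>i<n. - f i) = (-1) ^ n * (\<Prod>i<n. f i :: 'a::comm_ring_1)"
  by (induction n) (auto simp: algebra_simps)

lemma prod_of_nat_Suc: "(\<Prod>i<n. of_nat (Suc i) :: 'a::comm_semiring_1) = of_nat (fact n)"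
  by (induction n) (simp_all add: algebra_simps)

lemma fb_neg1: "of_nat (fact n) \<noteq> (0::'a::field) \<Longrightarrow> fb (-1 :: 'a) n = (-1) ^ n"
proof -
  assume h: "of_nat (fact n) \<noteq> (0::'a)"
  have "(\<Prod>i<n. (-1::'a) - of_nat i) = (\<Prod>i<n. - of_nat (Suc i))"
    by (intro prod.cong) (auto simp: algebra_simps)
  also have "\<dots> = (-1) ^ n * (\<Prod>i<n. of_nat (Suc i))" by (rule prod_neg)
  also have "(\<Prod>i<n. of_nat (Suc i) :: 'a) = of_nat (fact n)"
    by (rule prod_of_nat_Suc)
  finally show ?thesis using h by (simp add: fb_def)
qed

lemma fact_ne0_F: "n < CARD('p) \<Longrightarrow> (of_nat (fact n) :: 'p::prime_card F) \<noteq> 0"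
  by (simp add: ofnat_F_eq_0 prime_dvd_fact_iff[OF prime_card])

lemma fact_ne0_mr: "n < CARD('p) \<Longrightarrow> (of_nat (fact n) :: 'p::prime_card mod_ring) \<noteq> 0"
  by (simp add: of_nat_eq_0_iff_char_dvd prime_dvd_fact_iff[OF prime_card])

lemma prod_lin: "(\<Prod>i<CARD('p). [:- of_nat i, 1:]) = (monom 1 CARD('p) - [:0,1:] :: 'p::prime_card F poly)"
proof (rule poly_eqI_degree_lead_coeff[where n = "CARD('p)" and A = "of_nat ` {..<CARD('p)}"])
  have p2: "CARD('p) \<ge> 2" by (rule card_ge2)
  have dA: "degree (\<Prod>i<CARD('p). [:- of_nat i, 1:] :: 'p F poly) = CARD('p)"
    by (subst degree_prod_eq_sum_degree) auto
  have lA: "lead_coeff (\<Prod>i<CARD('p). [:- of_nat i, 1:] :: 'p F poly) = 1"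
    by (simp add: lead_coeff_prod)
  show "coeff (\<Prod>i<CARD('p). [:- of_nat i, 1:] :: 'p F poly) CARD('p) = coeff (monom 1 CARD('p) - [:0,1:]) CARD('p)"
    using lA dA p2 by (simp add: coeff_eq_0)
  show "CARD('p) \<le> card (of_nat ` {..<CARD('p)} :: 'p F set)"
    by (subst card_image) (auto intro: inj_onI F_of_nat_inj)
  show "degree (\<Prod>i<CARD('p). [:- of_nat i, 1:] :: 'p F poly) \<le> CARD('p)" using dA by simp
  show "degree (monom 1 CARD('p) - [:0,1:] :: 'p F poly) \<le> CARD('p)"
    using p2 by (intro degree_diff_le) (auto simp: degree_monom_le)
  fix z :: "'p F" assume "z \<in> of_nat ` {..<CARD('p)}"
  then obtain i where i: "i < CARD('p)" "z = of_nat i" by auto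
  have "poly (\<Prod>i<CARD('p). [:- of_nat i, 1:]) z = 0"
    using i by (auto simp: poly_prod)
  moreover have "poly (monom 1 CARD('p) - [:0,1:]) z = 0"
    using i by (simp add: poly_monom F_fermat_nat)
  ultimately show "poly (\<Prod>i<CARD('p). [:- of_nat i, 1:]) z = poly (monom 1 CARD('p) - [:0,1:]) z"
    by simp
qed

lemma prod_pow: "(\<Prod>i<CARD('p). x - of_nat i) = x ^ CARD('p) - (x::'p::prime_card F)"
proof -
  have "poly (\<Prod>i<CARD('p). [:- of_nat i, 1:]) x = poly (monom 1 CARD('p) - [:0,1:] :: 'p F poly) x"
    by (simp only: prod_lin)
  then show ?thesis by (simp add: poly_prod poly_monom)
qed

lemma wilson_F: "odd CARD('p) \<Longrightarrow> (of_nat (fact (CARD('p) - 1)) :: 'p::prime_card F) = -1"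
proof -
  assume odd: "odd CARD('p)"
  define n where "n = CARD('p) - 1"
  have pn: "CARD('p) = Suc n" using card_ge2[where 'p='p] by (simp add: n_def)
  have n1: "n \<ge> 1" using card_ge2[where 'p='p] by (simp add: n_def)
  have "[:0,1:] * (\<Prod>i<n. [:- of_nat (Suc i), 1:]) = (\<Prod>i<CARD('p). [:- of_nat i, 1:] :: 'p F poly)"
    by (simp only: pn prod.lessThan_Suc_shift) simp
  also have "\<dots> = monom 1 CARD('p) - [:0,1:]" by (rule prod_lin)
  also have "\<dots> = [:0,1:] * (monom 1 n - 1)"
    by (simp add: pn monom_Suc algebra_simps)
  finally have "(\<Prod>i<n. [:- of_nat (Suc i), 1:]) = (monom 1 n - 1 :: 'p F poly)"
    by simp
  then have "poly (\<Prod>i<n. [:- of_nat (Suc i), 1:]) 0 = poly (monom 1 n - 1 :: 'p F poly) 0"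
    by simp
  then have "(\<Prod>i<n. - of_nat (Suc i) :: 'p F) = -1"
    using n1 by (simp add: poly_prod poly_monom)
  then have "(-1) ^ n * (\<Prod>i<n. of_nat (Suc i) :: 'p F) = -1"
    by (metis prod_neg)
  moreover have "(\<Prod>i<n. of_nat (Suc i) :: 'p F) = of_nat (fact n)"
    by (rule prod_of_nat_Suc)
  moreover have "even n" using odd pn by simp
  ultimately show ?thesis by (simp add: n_def)
qed

lemma ofnat_card_F [simp]: "(of_nat CARD('p) :: 'p::prime_card F) = 0"
  by (simp add: ofnat_F_eq_0)

lemma ofnat_sub_p: "k \<le> CARD('p) \<Longrightarrow> (of_nat (CARD('p) - k) :: 'p::prime_card F) = - of_nat k"
proof -
  assume k: "k \<le> CARD('p)"
  have "(of_nat (CARD('p) - k) :: 'p F) + of_nat k = of_nat CARD('p)" using k by (simp flip: of_nat_add)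
  then show ?thesis by (simp add: eq_neg_iff_add_eq_0)
qed

lemma neg_pow_even: "even n \<Longrightarrow> (- x) ^ n = (x::'a::comm_ring_1) ^ n"
  by simp

lemma wgen: "odd CARD('p) \<Longrightarrow> i < CARD('p) \<Longrightarrow>
  (of_nat (fact i) * of_nat (fact (CARD('p) - 1 - i)) :: 'p::prime_card F) = (-1) ^ (Suc i)"
proof (induction i)
  case 0
  then show ?case using wilson_F[OF 0(1)] by simp
next
  case (Suc i)
  have IH: "(of_nat (fact i) * of_nat (fact (CARD('p) - 1 - i)) :: 'p F) = (-1) ^ (Suc i)"
    using Suc by simp
  have e: "CARD('p) - 1 - i = Suc (CARD('p) - 1 - Suc i)" using Suc.prems by simp
  have e2: "Suc (CARD('p) - 1 - Suc i) = CARD('p) - Suc i" using Suc.prems by simp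
  have f0: "fact (CARD('p) - 1 - i) = Suc (CARD('p) - 1 - Suc i) * fact (CARD('p) - 1 - Suc i)"
    by (metis e fact_Suc of_nat_id)
  have f: "(of_nat (fact (CARD('p) - 1 - i)) :: 'p F) = - of_nat (Suc i) * of_nat (fact (CARD('p) - 1 - Suc i))"
    unfolding f0 of_nat_mult e2 ofnat_sub_p[OF less_imp_le[OF Suc.prems(2)]] ..
  show ?case using IH unfolding f by (simp add: algebra_simps)
qed

lemma K2: "odd CARD('p) \<Longrightarrow> x * fb (x - 1) (CARD('p) - 1) = - (x ^ CARD('p) - (x::'p::prime_card F))"
proof -
  assume odd: "odd CARD('p)"
  obtain n where pn: "CARD('p) = Suc n" using card_ge2[where 'p='p] by (cases "CARD('p)") auto
  have "(\<Prod>i<Suc n. x - of_nat i) = x * (\<Prod>i<n. x - 1 - of_nat i)"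
    by (simp only: prod.lessThan_Suc_shift) (simp add: algebra_simps)
  then have "x * (\<Prod>i<n. x - 1 - of_nat i) = x ^ CARD('p) - x"
    using prod_pow[of x] pn by simp
  moreover have "inverse (of_nat (fact n) :: 'p F) = -1"
    using wilson_F[OF odd] pn by simp
  ultimately show ?thesis using pn by (simp add: fb_def)
qed

definition aa :: "'p::prime_card F" where "aa = to_fract alpha"

lemma aa_ne0: "aa \<noteq> 0" by (simp add: aa_def alpha_def)

definition mco :: "nat \<Rightarrow> nat \<Rightarrow> 'p::prime_card F" where
  "mco s k = (- of_nat s) ^ k * inverse (of_nat (fact k)) * fb (of_nat s * aa - 1) (CARD('p) - 1 - k)"

definition Mp :: "nat \<Rightarrow> 'p::prime_card F poly" where
  "Mp s = (\<Sum>k<CARD('p). monom (mco s k) k)"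

lemma coeff_Mp: "coeff (Mp s :: 'p::prime_card F poly) k = (if k < CARD('p) then mco s k else 0)"
  by (simp add: Mp_def coeff_sum coeff_monom)

lemma degree_Mp: "degree (Mp s :: 'p::prime_card F poly) < CARD('p)"
proof -
  have "degree (Mp s :: 'p F poly) \<le> CARD('p) - 1" by (rule degree_le) (auto simp: coeff_Mp)
  then show ?thesis using card_ge2[where 'p='p] by linarith
qed

lemma lag_Mp: "laguerre CARD('p) = (Mp 1 :: 'p::prime_card F poly)"
  by (simp add: laguerre_def Mp_def laguerre_coeff_def mco_def tf_pbinom aa_def)

lemma bF_eq: "to_fract (bpoly CARD('p) 1 s) = (\<Sum>k<CARD('p). (- (1 / of_nat s)) ^ k *
   (fb (aa - 1) (CARD('p) - 1 - k) * fb (of_nat s * aa - 1) k) :: 'p::prime_card F)"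
  by (simp add: bpoly_def tf_pbinom aa_def)

definition NN :: "'p::prime_card F poly" where "NN = monom 1 CARD('p) - [:aa ^ CARD('p) - aa:]"

definition ode :: "'p::prime_card F \<Rightarrow> 'p F poly \<Rightarrow> 'p F poly" where
  "ode t f = [:0,1:] * pderiv f - smult t ([:-aa, 1:] * f)"

lemma coeff_ode: "coeff (ode t f) j = of_nat j * coeff f j - t * ((if j = 0 then 0 else coeff f (j - 1)) - aa * coeff f j)"
  by (cases j) (simp_all add: ode_def coeff_pderiv algebra_simps)

lemma coeff_NN: "coeff NN j = (if j = CARD('p) then 1 else 0) - (if j = 0 then aa ^ CARD('p) - aa else (0::'p::prime_card F))"
  using card_ge2[where 'p='p] by (cases j) (auto simp: NN_def coeff_monom)

lemma mco_top: "odd CARD('p) \<Longrightarrow> \<not> CARD('p) dvd s \<Longrightarrow> mco s (CARD('p) - 1) = (-1 :: 'p::prime_card F)"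
proof -
  assume odd: "odd CARD('p)" and s: "\<not> CARD('p) dvd s"
  have ev: "even (CARD('p) - 1)" using odd by simp
  have "(- (of_nat s :: 'p F)) ^ (CARD('p) - 1) = 1"
    by (simp only: neg_pow_even[OF ev] F_fermat1_nat[OF s])
  moreover have "inverse (of_nat (fact (CARD('p) - 1)) :: 'p F) = -1" using wilson_F[OF odd] by simp
  ultimately show ?thesis by (simp add: mco_def)
qed

lemma alg1: "(c::'a::comm_ring_1) * (- t * P * (ic * I) * B) - t * (P * I * (B * (t * a - 1 + (1 + c)) * (- ic)) - a * (- t * P * (ic * I) * B)) = 0"
  by (simp add: algebra_simps)

lemma ode_Mp:
  assumes odd: "odd CARD('p::prime_card)" and s: "\<not> CARD('p) dvd s"
  shows "ode (of_nat s) (Mp s) = smult (of_nat s) (NN :: 'p F poly)"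
proof (rule poly_eqI)
  fix j
  have p2: "CARD('p) \<ge> 2" by (rule card_ge2)
  consider "j = 0" | "0 < j" "j < CARD('p)" | "j = CARD('p)" | "j > CARD('p)" by linarith
  then show "coeff (ode (of_nat s) (Mp s :: 'p F poly)) j = coeff (smult (of_nat s) NN) j"
  proof cases
    case 1
    have "(of_nat s * aa) * fb (of_nat s * aa - 1) (CARD('p) - 1) = - ((of_nat s * aa) ^ CARD('p) - (of_nat s * aa :: 'p F))"
      by (rule K2[OF odd])
    have k: "(of_nat s * aa) * fb (of_nat s * aa - 1) (CARD('p) - 1) = - (of_nat s * aa ^ CARD('p) - of_nat s * (aa :: 'p F))"
    proof -
      have "(of_nat s * aa :: 'p F) ^ CARD('p) = of_nat s * aa ^ CARD('p)" by (simp only: power_mult_distrib F_fermat_nat)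
      with K2[OF odd, of "of_nat s * aa"] show ?thesis by simp
    qed
    have "coeff (ode (of_nat s) (Mp s :: 'p F poly)) 0 = (of_nat s * aa) * fb (of_nat s * aa - 1) (CARD('p) - 1)"
      using p2 by (simp add: coeff_ode coeff_Mp mco_def mult.assoc)
    also have "\<dots> = - (of_nat s * aa ^ CARD('p) - of_nat s * aa)" by (rule k)
    also have "\<dots> = coeff (smult (of_nat s) NN) 0" using p2 by (simp add: coeff_NN algebra_simps)
    finally show ?thesis using 1 by simp
  next
    case 2
    then obtain i where j: "j = Suc i" by (cases j) auto
    define n where "n = CARD('p) - 1 - Suc i"
    have e1: "CARD('p) - 1 - i = Suc n" using 2 j by (simp add: n_def)
    have "n = CARD('p) - Suc (Suc i)" by (simp add: n_def)
    then have e2: "(of_nat n :: 'p F) = - of_nat (Suc (Suc i))" using 2 j by (simp add: ofnat_sub_p)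
    have "Suc n = CARD('p) - Suc i" using 2 j by (simp add: n_def)
    then have e3: "(of_nat (Suc n) :: 'p F) = - of_nat (Suc i)" using 2 j by (simp add: ofnat_sub_p)
    have m1: "coeff (Mp s :: 'p F poly) (Suc i) = - of_nat s * (- of_nat s) ^ i * (inverse (of_nat (Suc i)) * inverse (of_nat (fact i))) * fb (of_nat s * aa - 1) n"
    proof -
      have "coeff (Mp s :: 'p F poly) (Suc i) = mco s (Suc i)" using 2 j by (simp add: coeff_Mp)
      also have "\<dots> = - of_nat s * (- of_nat s) ^ i * (inverse (of_nat (Suc i)) * inverse (of_nat (fact i))) * fb (of_nat s * aa - 1) n"
        by (simp only: mco_def n_def power_Suc fact_Suc of_nat_id of_nat_mult inverse_mult_distrib)
      finally show ?thesis .
    qed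
    have m0: "coeff (Mp s :: 'p F poly) i = (- of_nat s) ^ i * inverse (of_nat (fact i)) * (fb (of_nat s * aa - 1) n * (of_nat s * aa - 1 + (1 + of_nat (Suc i))) * (- inverse (of_nat (Suc i))))"
    proof -
      have "coeff (Mp s :: 'p F poly) i = mco s i" using 2 j by (simp add: coeff_Mp)
      also have "\<dots> = (- of_nat s) ^ i * inverse (of_nat (fact i)) * fb (of_nat s * aa - 1) (Suc n)"
        by (simp only: mco_def e1)
      also have "fb (of_nat s * (aa :: 'p F) - 1) (Suc n) = fb (of_nat s * aa - 1) n * (of_nat s * aa - 1 + (1 + of_nat (Suc i))) * (- inverse (of_nat (Suc i)))"
        by (simp only: fb_Suc e2 e3 diff_minus_eq_add of_nat_Suc[of "Suc i"] inverse_minus_eq)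
      finally show ?thesis .
    qed
    have nn: "coeff (NN :: 'p F poly) (Suc i) = 0" using 2 j by (simp add: coeff_NN)
    have "coeff (ode (of_nat s) (Mp s :: 'p F poly)) (Suc i) = of_nat (Suc i) * coeff (Mp s :: 'p F poly) (Suc i) - of_nat s * (coeff (Mp s :: 'p F poly) i - aa * coeff (Mp s :: 'p F poly) (Suc i))"
      by (simp only: coeff_ode Suc_not_Zero if_False diff_Suc_1)
    also have "\<dots> = 0" unfolding m1 m0 by (rule alg1)
    finally show ?thesis using j nn by simp
  next
    case 3
    then show ?thesis using mco_top[OF odd s] p2 by (simp add: coeff_ode coeff_Mp coeff_NN)
  next
    case 4
    then show ?thesis by (simp add: coeff_ode coeff_Mp coeff_NN)
  qed
qed

lemma pderiv_NN: "pderiv (NN :: 'p::prime_card F poly) = 0"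
  by (simp add: NN_def pderiv_diff pderiv_monom pderiv_pCons)

lemma abel4: "(a::'a::ab_group_add) - b - (c - d) = a - c - (b - d)" by (simp add: algebra_simps)

lemma inv_neg1_pow: "inverse ((-1::'a::field) ^ i) = (-1) ^ i"
  by (induction i) (auto simp: inverse_mult_distrib)

lemma ode_diff: "ode t (f - g) = ode t f - ode t g"
  unfolding ode_def pderiv_diff right_diff_distrib smult_diff_right by (rule abel4)
lemma ode_NN_mult: "ode t (NN * q) = NN * ode t q"
  by (simp add: ode_def pderiv_mult pderiv_NN algebra_simps)
lemma ode_mult: "ode (t1 + t2) (f * g) = ode t1 f * g + f * ode t2 g"
  by (simp add: ode_def pderiv_mult algebra_simps smult_add_left)

lemma degree_NN: "degree (NN :: 'p::prime_card F poly) = CARD('p)"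
proof (rule antisym)
  show "degree (NN :: 'p F poly) \<le> CARD('p)" by (rule degree_le) (auto simp: coeff_NN)
  show "CARD('p) \<le> degree (NN :: 'p F poly)" by (rule le_degree) (simp add: coeff_NN)
qed

lemma NN_ne0: "(NN :: 'p::prime_card F poly) \<noteq> 0"
  using degree_NN[where 'p='p] card_ge2[where 'p='p] by auto

lemma degree_mod_NN: "degree (P mod (NN :: 'p::prime_card F poly)) < CARD('p)"
  using degree_mod_less[OF NN_ne0, of P] degree_NN[where 'p='p] card_ge2[where 'p='p] by auto

lemma ode_rec:
  fixes y :: "'p::prime_card F poly"
  assumes dy: "degree y < CARD('p)" and dv: "NN dvd ode t y" and k: "0 < k" "k < CARD('p)"
  shows "coeff (ode t y) k = 0"
proof -
  obtain q where q: "ode t y = NN * q" using dv unfolding dvd_def by blast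
  have hi: "coeff (ode t y) i = 0" if "i > CARD('p)" for i
  proof -
    have "coeff y i = 0" "coeff y (i - 1) = 0" using dy that by (auto intro: coeff_eq_0)
    then show ?thesis using that by (simp add: coeff_ode)
  qed
  show ?thesis
  proof (cases "q = 0")
    case True then show ?thesis using q by simp
  next
    case False
    have "degree (ode t y) \<le> CARD('p)" using hi by (intro degree_le) auto
    moreover have "degree (ode t y) = CARD('p) + degree q" using q False by (simp add: degree_mult_eq degree_NN NN_ne0)
    ultimately have "degree q = 0" by simp
    then obtain c where "q = [:c:]" by (metis degree_eq_zeroE)
    then show ?thesis using q k by (simp add: coeff_NN)
  qed
qed

lemma alg_rec: "(K::'a::comm_ring_1) * y - t * (x - a * y) = 0 \<Longrightarrow> t * x = (K + t * a) * y"
proof -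
  assume h: "K * y - t * (x - a * y) = 0"
  have "t * x = (K + t * a) * y - (K * y - t * (x - a * y))" by (simp add: algebra_simps)
  then show ?thesis using h by simp
qed

lemma ode_unique:
  fixes y z :: "'p::prime_card F poly"
  assumes dy: "degree y < CARD('p)" and dz: "degree z < CARD('p)" and t: "t \<noteq> 0"
    and vy: "NN dvd ode t y" and vz: "NN dvd ode t z"
  shows "smult (coeff z (CARD('p) - 1)) y = smult (coeff y (CARD('p) - 1)) z"
proof -
  have rec: "t * coeff f (k - 1) = (of_nat k + t * aa) * coeff f k"
    if "degree f < CARD('p)" "NN dvd ode t f" "0 < k" "k < CARD('p)" for f :: "'p F poly" and k
  proof -
    have "coeff (ode t f) k = 0" using ode_rec[OF that] .
    then have "of_nat k * coeff f k - t * (coeff f (k - 1) - aa * coeff f k) = 0"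
      using that(3) by (simp add: coeff_ode)
    then show ?thesis by (rule alg_rec)
  qed
  define Y where "Y = coeff y (CARD('p) - 1)"
  define Z where "Z = coeff z (CARD('p) - 1)"
  have main: "Z * coeff y (CARD('p) - 1 - d) = Y * coeff z (CARD('p) - 1 - d)"
    if "d < CARD('p)" for d
    using that
  proof (induction d)
    case 0 then show ?case by (simp add: Y_def Z_def mult.commute)
  next
    case (Suc d)
    define k where "k = CARD('p) - 1 - d"
    define C where "C = (of_nat k + t * aa)"
    have k0: "0 < k" "k < CARD('p)" using Suc.prems by (auto simp: k_def)
    have km: "CARD('p) - 1 - Suc d = k - 1" by (simp add: k_def)
    have ry: "t * coeff y (k - 1) = C * coeff y k" using rec[OF dy vy k0] by (simp add: C_def)
    have rz: "t * coeff z (k - 1) = C * coeff z k" using rec[OF dz vz k0] by (simp add: C_def)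
    have IH: "Z * coeff y k = Y * coeff z k"
      using Suc by (simp add: k_def)
    have "t * (Z * coeff y (k - 1)) = Z * (t * coeff y (k - 1))" by (simp only: mult_ac)
    also have "\<dots> = Z * (C * coeff y k)" by (simp only: ry)
    also have "\<dots> = C * (Z * coeff y k)" by (simp only: mult_ac)
    also have "\<dots> = C * (Y * coeff z k)" by (simp only: IH)
    also have "\<dots> = Y * (C * coeff z k)" by (simp only: mult_ac)
    also have "\<dots> = Y * (t * coeff z (k - 1))" by (simp only: rz)
    also have "\<dots> = t * (Y * coeff z (k - 1))" by (simp only: mult_ac)
    finally have "t * (Z * coeff y (k - 1)) = t * (Y * coeff z (k - 1))" .
    then have "Z * coeff y (k - 1) = Y * coeff z (k - 1)" using t by simp
    then show ?case unfolding km .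
  qed
  show ?thesis
  proof (rule poly_eqI)
    fix i
    show "coeff (smult (coeff z (CARD('p) - 1)) y) i = coeff (smult (coeff y (CARD('p) - 1)) z) i"
    proof (cases "i < CARD('p)")
      case True
      have e: "CARD('p) - 1 - (CARD('p) - 1 - i) = i" using True by simp
      have lt: "CARD('p) - 1 - i < CARD('p)" using True by simp
      have "Z * coeff y i = Y * coeff z i" using main[OF lt] unfolding e .
      then show ?thesis by (simp add: Y_def Z_def)
    next
      case False
      then have "coeff y i = 0" "coeff z i = 0" using dy dz by (auto intro: coeff_eq_0)
      then show ?thesis by simp
    qed
  qed
qed

lemma mod_coeff_top:
  fixes P :: "'p::prime_card F poly"
  assumes dP: "degree P \<le> 2 * CARD('p) - 2"
  shows "coeff (P mod NN) (CARD('p) - 1) = coeff P (CARD('p) - 1)"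
proof -
  define q where "q = P div NN"
  have P: "P = NN * q + P mod NN" using div_mult_mod_eq[of P NN] by (simp add: q_def ac_simps)
  have dr: "degree (P mod NN) < CARD('p)" by (rule degree_mod_NN)
  have c0: "coeff (NN * q) (CARD('p) - 1) = 0"
  proof (cases "q = 0")
    case True then show ?thesis by simp
  next
    case False
    have "degree (NN * q) = CARD('p) + degree q" using False by (simp add: degree_mult_eq NN_ne0 degree_NN)
    moreover have "NN * q = P - P mod NN" using P by (simp add: eq_diff_eq)
    moreover have "degree (P - P mod NN) \<le> 2 * CARD('p) - 2" using dP dr by (intro degree_diff_le) auto
    ultimately have "degree q \<le> CARD('p) - 2" by simp
    then have dq: "degree q < CARD('p) - 1" using card_ge2[where 'p='p] by linarith
    have "coeff q (CARD('p) - 1) = 0" by (rule coeff_eq_0[OF dq])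
    then show ?thesis using card_ge2[where 'p='p] by (simp add: NN_def left_diff_distrib coeff_monom_mult)
  qed
  from P have "coeff P (CARD('p) - 1) = coeff (NN * q + P mod NN) (CARD('p) - 1)" by (rule arg_cong)
  then show ?thesis using c0 by simp
qed

lemma neg1_pow_Suc: "(-1::'a::comm_ring_1) ^ i * (-1) ^ Suc i = -1"
  by (simp add: power_add[symmetric])

lemma coeff_prod_top:
  assumes odd: "odd CARD('p::prime_card)" and s: "\<not> CARD('p) dvd s"
  shows "coeff (Mp 1 * Mp s :: 'p F poly) (CARD('p) - 1) = - to_fract (bpoly CARD('p) 1 s)"
proof -
  obtain n where pn: "CARD('p) = Suc n" using card_ge2[where 'p='p] by (cases "CARD('p)") auto
  have ev: "even n" using odd pn by simp
  have S0: "(of_nat s :: 'p F) \<noteq> 0" using s by (simp add: ofnat_F_eq_0)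
  have Sn: "(- of_nat s :: 'p F) ^ n = 1"
    using F_fermat1_nat[OF s] pn ev by simp
  have trm: "mco 1 i * mco s (n - i) = - ((- (1 / of_nat s)) ^ i * (fb (aa - 1) (n - i) * fb (of_nat s * aa - 1) i) :: 'p F)"
    if i: "i \<le> n" for i
  proof -
    have W: "(of_nat (fact i) * of_nat (fact (n - i)) :: 'p F) = (-1) ^ Suc i"
      using wgen[OF odd, of i] i pn by simp
    have W': "inverse (of_nat (fact i) :: 'p F) * inverse (of_nat (fact (n - i))) = (-1) ^ Suc i"
    proof -
      have "inverse (of_nat (fact i) :: 'p F) * inverse (of_nat (fact (n - i))) = inverse (of_nat (fact i) * of_nat (fact (n - i)))"
        by (simp only: inverse_mult_distrib)
      also have "\<dots> = inverse ((-1) ^ Suc i)" by (simp only: W)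
      also have "\<dots> = (-1) ^ Suc i" by (rule inv_neg1_pow)
      finally show ?thesis .
    qed
    have pw: "(- (1 / of_nat s :: 'p F)) ^ i = (- of_nat s) ^ (n - i)"
    proof -
      have h1: "(- of_nat s :: 'p F) ^ i * (- of_nat s) ^ (n - i) = 1"
        using Sn i by (simp flip: power_add)
      have h2: "(- of_nat s :: 'p F) ^ i * (- (1 / of_nat s)) ^ i = 1"
        using S0 by (simp flip: power_mult_distrib)
      show ?thesis using inverse_unique[OF h1] inverse_unique[OF h2] by simp
    qed
    have ni: "n - (n - i) = i" using i by simp
    have "mco 1 i * mco s (n - i) = ((-1) ^ i * inverse (of_nat (fact i)) * fb (aa - 1) (n - i)) *
        ((- of_nat s) ^ (n - i) * inverse (of_nat (fact (n - i))) * fb (of_nat s * aa - 1) i :: 'p F)"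
      by (simp add: mco_def pn ni)
    also have "\<dots> = ((-1) ^ i * (-1) ^ Suc i) * (- of_nat s) ^ (n - i) * (fb (aa - 1) (n - i) * fb (of_nat s * aa - 1) i)"
      by (simp only: W'[symmetric] mult_ac)
    also have "\<dots> = - ((- (1 / of_nat s)) ^ i * (fb (aa - 1) (n - i) * fb (of_nat s * aa - 1) i))"
      by (simp only: neg1_pow_Suc pw) simp
    finally show ?thesis .
  qed
  have "coeff (Mp 1 * Mp s :: 'p F poly) (CARD('p) - 1) = (\<Sum>i\<le>n. mco 1 i * mco s (n - i))"
    by (auto simp: coeff_mult coeff_Mp pn intro!: sum.cong)
  also have "\<dots> = (\<Sum>i\<le>n. - ((- (1 / of_nat s)) ^ i * (fb (aa - 1) (n - i) * fb (of_nat s * aa - 1) i) :: 'p F))"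
  proof (rule sum.cong)
    fix i assume "i \<in> {..n}"
    then have "i \<le> n" by simp
    then show "mco 1 i * mco s (n - i) = - ((- (1 / of_nat s)) ^ i * (fb (aa - 1) (n - i) * fb (of_nat s * aa - 1) i) :: 'p F)"
      by (rule trm)
  qed simp
  also have "\<dots> = - to_fract (bpoly CARD('p) 1 s)"
    using bF_eq[where 'p='p, of s] by (simp add: pn lessThan_Suc_atMost sum_negf)
  finally show ?thesis .
qed

lemma step:
  assumes odd: "odd CARD('p::prime_card)" and s1: "1 \<le> s" and s2: "Suc s < CARD('p)"
  shows "NN dvd (Mp 1 * Mp s - smult (to_fract (bpoly CARD('p) 1 s)) (Mp (Suc s)) :: 'p F poly)"
proof -
  define P where "P = (Mp 1 * Mp s :: 'p F poly)"
  define b where "b = (to_fract (bpoly CARD('p) 1 s) :: 'p F)"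
  define y where "y = P mod NN"
  define q where "q = P div NN"
  define z where "z = (Mp (Suc s) :: 'p F poly)"
  define t where "t = (1 + of_nat s :: 'p F)"
  have Pq: "P = NN * q + y" using div_mult_mod_eq[of P NN] by (simp add: y_def q_def ac_simps)
  have nd1: "\<not> CARD('p) dvd 1" using card_ge2[where 'p='p] by simp
  have nds: "\<not> CARD('p) dvd s" using s1 s2 by (auto dest: dvd_imp_le)
  have ndS: "\<not> CARD('p) dvd Suc s" using s2 by (auto dest: dvd_imp_le)
  have o1: "ode 1 (Mp 1) = (NN :: 'p F poly)" using ode_Mp[OF odd nd1] by simp
  have os: "ode (of_nat s) (Mp s) = smult (of_nat s) (NN :: 'p F poly)" by (rule ode_Mp[OF odd nds])
  have "ode t P = ode 1 (Mp 1) * Mp s + Mp 1 * ode (of_nat s) (Mp s)" unfolding t_def P_def by (rule ode_mult)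
  also have "\<dots> = NN * (Mp s + smult (of_nat s) (Mp 1))" unfolding o1 os by (simp add: algebra_simps)
  finally have dP: "NN dvd ode t P" by (rule dvdI)
  have yP: "y = P - NN * q" using Pq by simp
  have dy: "NN dvd ode t y" unfolding yP ode_diff ode_NN_mult by (intro dvd_diff dP dvd_triv_left)
  have degy: "degree y < CARD('p)" unfolding y_def by (rule degree_mod_NN)
  have degz: "degree z < CARD('p)" unfolding z_def by (rule degree_Mp)
  have tS: "t = of_nat (Suc s)" by (simp add: t_def)
  have t0: "t \<noteq> 0" unfolding tS using ndS ofnat_F_eq_0[where 'p='p, of "Suc s"] by simp
  have dz: "NN dvd ode t z" unfolding z_def tS ode_Mp[OF odd ndS] by (intro dvd_smult dvd_refl)
  have u: "smult (coeff z (CARD('p) - 1)) y = smult (coeff y (CARD('p) - 1)) z"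
    by (rule ode_unique[OF degy degz t0 dy dz])
  have cz: "coeff z (CARD('p) - 1) = -1" unfolding z_def using mco_top[OF odd ndS] card_ge2[where 'p='p] by (simp add: coeff_Mp)
  have degP: "degree P \<le> 2 * CARD('p) - 2"
  proof -
    have "degree P \<le> degree (Mp 1 :: 'p F poly) + degree (Mp s :: 'p F poly)" unfolding P_def by (rule degree_mult_le)
    then show ?thesis using degree_Mp[where 'p='p, of 1] degree_Mp[where 'p='p, of s] by linarith
  qed
  have "coeff y (CARD('p) - 1) = coeff P (CARD('p) - 1)" unfolding y_def by (rule mod_coeff_top[OF degP])
  also have "\<dots> = - b" unfolding P_def b_def by (rule coeff_prod_top[OF odd nds])
  finally have cy: "coeff y (CARD('p) - 1) = - b" .
  have "y = smult b z" using u cz cy by simp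
  then have "P - smult b z = NN * q" using Pq by simp
  then have "NN dvd P - smult b z" by (rule dvdI)
  then show ?thesis by (simp add: P_def b_def z_def)
qed

lemma bpoly_ne0:
  assumes odd: "odd CARD('p::prime_card)" and s1: "1 \<le> s" and s2: "Suc s < CARD('p)"
  shows "(bpoly CARD('p) 1 s :: 'p mod_ring poly) \<noteq> 0"
proof -
  define u where "u = (- (1 / of_nat s) :: 'p mod_ring)"
  have fbm: "fb (-1 :: 'p mod_ring) m = (-1) ^ m" if "m < CARD('p)" for m
    using fact_ne0_mr[OF that] by (rule fb_neg1)
  have ev: "even (CARD('p) - 1)" using odd by simp
  have "poly (bpoly CARD('p) 1 s) 0 = (\<Sum>k<CARD('p). u ^ k * (fb (-1) (CARD('p) - 1 - k) * fb (-1 :: 'p mod_ring) k))"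
    by (simp add: bpoly_def poly_sum poly_pbinom alpha_def u_def)
  also have "\<dots> = (\<Sum>k<CARD('p). u ^ k)"
  proof (rule sum.cong)
    fix k assume "k \<in> {..<CARD('p)}"
    then have k: "k < CARD('p)" by simp
    have e: "CARD('p) - 1 - k + k = CARD('p) - 1" using k by simp
    have "fb (-1) (CARD('p) - 1 - k) * fb (-1 :: 'p mod_ring) k = (-1) ^ (CARD('p) - 1 - k) * (-1) ^ k"
      using k by (simp add: fbm)
    also have "\<dots> = (-1) ^ (CARD('p) - 1)" by (simp only: e flip: power_add)
    also have "\<dots> = 1" using ev by simp
    finally show "u ^ k * (fb (-1) (CARD('p) - 1 - k) * fb (-1 :: 'p mod_ring) k) = u ^ k" by simp
  qed simp
  finally have pb: "poly (bpoly CARD('p) 1 s) 0 = (\<Sum>k<CARD('p). u ^ k)" .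
  have s0: "(of_nat s :: 'p mod_ring) \<noteq> 0" using s1 s2 by (auto simp: of_nat_eq_0_iff_char_dvd dest: dvd_imp_le)
  have ndS: "\<not> CARD('p) dvd Suc s" using s2 by (auto dest: dvd_imp_le)
  have u1: "u \<noteq> 1"
  proof
    assume u: "u = 1"
    have "u * of_nat s = -1" using s0 by (simp add: u_def)
    then have "(of_nat s :: 'p mod_ring) = -1" using u by simp
    then have "(of_nat (Suc s) :: 'p mod_ring) = 0" by simp
    then show False using ndS of_nat_eq_0_iff_char_dvd[where 'a="'p mod_ring", of "Suc s"] by simp
  qed
  have "(1 - u) * (\<Sum>k<CARD('p). u ^ k) = (1 - u) * 1"
    using one_diff_power_eq[of u "CARD('p)"] by (simp add: mod_ring_fermat)
  then have "(\<Sum>k<CARD('p). u ^ k) = 1" using u1 by simp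
  then have "poly (bpoly CARD('p) 1 s :: 'p mod_ring poly) 0 \<noteq> 0" using pb by simp
  then show ?thesis by auto
qed

definition ee :: "nat \<Rightarrow> 'p::prime_card F" where "ee k = (\<Prod>s=1..k-1. to_fract (bpoly CARD('p) 1 s))"

lemma pow_step:
  assumes odd: "odd CARD('p::prime_card)"
  shows "1 \<le> k \<Longrightarrow> k < CARD('p) \<Longrightarrow> NN dvd ((Mp 1) ^ k - smult (ee k) (Mp k) :: 'p F poly)"
proof (induction k)
  case 0 then show ?case by simp
next
  case (Suc k)
  show ?case
  proof (cases "k = 0")
    case True then show ?thesis by (simp add: ee_def)
  next
    case False
    then have k1: "1 \<le> k" by simp
    have IH: "NN dvd ((Mp 1) ^ k - smult (ee k) (Mp k) :: 'p F poly)" using Suc k1 by simp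
    have st: "NN dvd (Mp 1 * Mp k - smult (to_fract (bpoly CARD('p) 1 k)) (Mp (Suc k)) :: 'p F poly)"
      by (rule step[OF odd k1 Suc.prems(2)])
    have ee: "ee (Suc k) = (ee k * to_fract (bpoly CARD('p) 1 k) :: 'p F)"
    proof -
      have "{1..Suc k - 1} = insert k {1..k - 1}" using k1 by auto
      then show ?thesis unfolding ee_def using k1 by (simp add: mult.commute)
    qed
    have "(Mp 1) ^ Suc k - smult (ee (Suc k)) (Mp (Suc k)) = Mp 1 * ((Mp 1) ^ k - smult (ee k) (Mp k)) + smult (ee k) (Mp 1 * Mp k - smult (to_fract (bpoly CARD('p) 1 k)) (Mp (Suc k)) :: 'p F poly)"
      unfolding ee by (simp add: algebra_simps smult_diff_right)
    then show ?thesis using IH st by (simp add: dvd_add dvd_mult dvd_smult)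
  qed
qed

lemma mr_powsum: "m < CARD('p) - 1 \<Longrightarrow> (\<Sum>x\<in>(UNIV :: 'p::prime_card mod_ring set). x ^ m) = 0"
proof -
  assume m: "m < CARD('p) - 1"
  show ?thesis
  proof (cases "m = 0")
    case True then show ?thesis by simp
  next
    case False
    have "\<exists>c::'p mod_ring. c \<noteq> 0 \<and> c ^ m \<noteq> 1"
    proof (rule ccontr)
      assume "\<not> ?thesis"
      then have all: "\<And>c::'p mod_ring. c \<noteq> 0 \<Longrightarrow> c ^ m = 1" by blast
      define Q where "Q = (monom 1 m - 1 :: 'p mod_ring poly)"
      have cQ: "coeff Q m = 1" using False by (simp add: Q_def coeff_monom)
      then have Q0: "Q \<noteq> 0" by auto
      have dQ: "degree Q \<le> m" unfolding Q_def by (intro degree_diff_le) (auto simp: degree_monom_le)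
      have sub: "UNIV - {0} \<subseteq> {x. poly Q x = 0}" using all by (auto simp: Q_def poly_monom)
      have "card (UNIV - {0} :: 'p mod_ring set) \<le> card {x. poly Q x = 0}" by (rule card_mono[OF poly_roots_finite[OF Q0] sub])
      also have "\<dots> \<le> degree Q" by (rule card_poly_roots_bound[OF Q0])
      finally have "CARD('p) - 1 \<le> m" using dQ by (simp add: card_Diff_singleton)
      then show False using m by simp
    qed
    then obtain c :: "'p mod_ring" where c: "c \<noteq> 0" "c ^ m \<noteq> 1" by blast
    define S where "S = (\<Sum>x\<in>(UNIV :: 'p mod_ring set). x ^ m)"
    have "S = (\<Sum>x\<in>UNIV. (c * x) ^ m :: 'p mod_ring)"
      unfolding S_def by (rule sum.reindex_bij_witness[of _ "\<lambda>y. c * y" "\<lambda>y. y / c"]) (use c in auto)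
    also have "\<dots> = c ^ m * S" by (simp add: S_def power_mult_distrib sum_distrib_left)
    finally have eq: "S = c ^ m * S" .
    have "S - c ^ m * S = 0" by (subst right_minus_eq) (rule eq)
    then have "(1 - c ^ m) * S = 0" by (simp add: algebra_simps)
    then show ?thesis using c by (simp add: S_def)
  qed
qed

lemma F_powsum: "m < CARD('p) - 1 \<Longrightarrow> (\<Sum>k<CARD('p). (of_nat k :: 'p::prime_card F) ^ m) = 0"
proof -
  assume m: "m < CARD('p) - 1"
  have inj: "inj_on (of_nat :: nat \<Rightarrow> 'p mod_ring) {..<CARD('p)}"
  proof (rule inj_onI)
    fix i j assume ij: "i \<in> {..<CARD('p)}" "j \<in> {..<CARD('p)}" "(of_nat i :: 'p mod_ring) = of_nat j"
    then have "emb (of_nat i :: 'p mod_ring) = emb (of_nat j)" by simp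
    then have "(of_nat i :: 'p F) = of_nat j" by simp
    then show "i = j" using ij F_of_nat_inj by auto
  qed
  have im: "(of_nat :: nat \<Rightarrow> 'p mod_ring) ` {..<CARD('p)} = UNIV"
  proof -
    have "x \<in> (of_nat :: nat \<Rightarrow> 'p mod_ring) ` {..<CARD('p)}" for x
      using surj_of_nat_mod_ring[of x] by auto
    then show ?thesis by auto
  qed
  have "(\<Sum>k<CARD('p). (of_nat k :: 'p mod_ring) ^ m) = (\<Sum>x\<in>UNIV. x ^ m)"
    unfolding im[symmetric] sum.reindex[OF inj] by (simp add: o_def)
  also have "\<dots> = 0" by (rule mr_powsum[OF m])
  finally have "emb (\<Sum>k<CARD('p). (of_nat k :: 'p mod_ring) ^ m) = 0" by simp
  then show ?thesis by simp
qed

lemma F_poly_sum: "degree Q < CARD('p) - 1 \<Longrightarrow> (\<Sum>k<CARD('p). poly Q (of_nat k :: 'p::prime_card F)) = 0"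
proof -
  assume d: "degree Q < CARD('p) - 1"
  have "(\<Sum>k<CARD('p). poly Q (of_nat k :: 'p F)) = (\<Sum>k<CARD('p). \<Sum>i\<le>degree Q. coeff Q i * of_nat k ^ i)"
    by (simp add: poly_altdef)
  also have "\<dots> = (\<Sum>i\<le>degree Q. coeff Q i * (\<Sum>k<CARD('p). of_nat k ^ i))"
    by (simp add: sum.swap[of _ "{..<CARD('p)}"] sum_distrib_left)
  also have "\<dots> = 0"
  proof (rule sum.neutral, rule ballI)
    fix i assume "i \<in> {..degree Q}"
    then have "i < CARD('p) - 1" using d by simp
    then show "coeff Q i * (\<Sum>k<CARD('p). of_nat k ^ i) = 0" by (simp add: F_powsum)
  qed
  finally show ?thesis .
qed

lemma sum_split0: "(\<Sum>k<CARD('p::prime_card). f k) = f 0 + (\<Sum>k\<in>{1..CARD('p) - 1}. f k)"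
proof -
  have "{..<CARD('p)} = insert 0 {1..CARD('p) - 1}" using card_ge2[where 'p='p] by auto
  then show ?thesis by simp
qed

lemma inv_cancel: "(x::'a::field) \<noteq> 0 \<Longrightarrow> inverse x * (a * (x * b)) = a * b"
proof -
  assume x: "x \<noteq> 0"
  have "inverse x * (a * (x * b)) = a * b * (inverse x * x)" by (simp only: mult_ac)
  then show ?thesis using x by simp
qed

lemma p3: "odd CARD('p::prime_card) \<Longrightarrow> CARD('p) \<ge> 3"
  using card_ge2[where 'p='p] by (cases "CARD('p) = 2") auto

lemma sum_Mp:
  assumes odd: "odd CARD('p::prime_card)"
  shows "(\<Sum>k\<in>{1..CARD('p)-1}. smult (inverse (of_nat k)) (Mp k)) = (- [:0, 1:] :: 'p F poly)"
proof (rule poly_eqI)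
  fix j
  have p3: "CARD('p) \<ge> 3" by (rule p3[OF odd])
  have cs: "coeff (\<Sum>k\<in>{1..CARD('p)-1}. smult (inverse (of_nat k)) (Mp k) :: 'p F poly) j = (\<Sum>k\<in>{1..CARD('p)-1}. inverse (of_nat k) * coeff (Mp k :: 'p F poly) j)"
    by (simp add: coeff_sum)
  have knz: "(of_nat k :: 'p F) \<noteq> 0" if k: "k \<in> {1..CARD('p)-1}" for k
    using k by (auto simp: ofnat_F_eq_0 dest: dvd_imp_le)
  consider "j = 0" | "1 \<le> j" "j < CARD('p)" | "j \<ge> CARD('p)" by linarith
  then show "coeff (\<Sum>k\<in>{1..CARD('p)-1}. smult (inverse (of_nat k)) (Mp k) :: 'p F poly) j = coeff (- [:0, 1:]) j"
  proof cases
    case 1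
    define V where "V = (fb (aa - 1) (CARD('p) - 1) :: 'p F)"
    have aV: "aa * V = - (aa ^ CARD('p) - aa)" using K2[OF odd, of aa] by (simp add: V_def)
    have fbk: "fb (of_nat k * aa - 1) (CARD('p) - 1) = V" if k: "k \<in> {1..CARD('p)-1}" for k
    proof -
      have k0: "(of_nat k :: 'p F) \<noteq> 0" by (rule knz[OF k])
      have "(of_nat k * aa) * fb (of_nat k * aa - 1) (CARD('p) - 1) = - ((of_nat k * aa) ^ CARD('p) - of_nat k * (aa :: 'p F))"
        by (rule K2[OF odd])
      also have "(of_nat k * aa :: 'p F) ^ CARD('p) = of_nat k * aa ^ CARD('p)" by (simp only: power_mult_distrib F_fermat_nat)
      also have "- (of_nat k * aa ^ CARD('p) - of_nat k * aa) = of_nat k * (- (aa ^ CARD('p) - aa))" by (simp add: algebra_simps)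
      also have "\<dots> = of_nat k * (aa * V)" by (simp only: aV)
      also have "\<dots> = (of_nat k * aa) * V" by (simp only: mult.assoc)
      finally have fin: "(of_nat k * aa) * fb (of_nat k * aa - 1) (CARD('p) - 1) = (of_nat k * aa) * V" .
      have a0: "aa \<noteq> (0::'p F)" by (rule aa_ne0)
      have c0: "(of_nat k * aa :: 'p F) \<noteq> 0" using k0 a0 by simp
      show ?thesis using fin mult_left_cancel[OF c0] by blast
    qed
    have inv_sum: "(\<Sum>k\<in>{1..CARD('p)-1}. inverse (of_nat k) :: 'p F) = 0"
    proof -
      have "(\<Sum>k\<in>{1..CARD('p)-1}. inverse (of_nat k) :: 'p F) = (\<Sum>k\<in>{1..CARD('p)-1}. (of_nat k) ^ (CARD('p) - 2))"
      proof (rule sum.cong)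
        fix k assume k: "k \<in> {1..CARD('p)-1}"
        have nd: "\<not> CARD('p) dvd k" using k by (auto dest: dvd_imp_le)
        have e: "Suc (CARD('p) - 2) = CARD('p) - 1" using p3 by simp
        have "(of_nat k :: 'p F) * of_nat k ^ (CARD('p) - 2) = of_nat k ^ (CARD('p) - 1)"
          by (simp only: power_Suc[symmetric] e)
        also have "\<dots> = 1" by (rule F_fermat1_nat[OF nd])
        finally show "inverse (of_nat k) = (of_nat k :: 'p F) ^ (CARD('p) - 2)" by (rule inverse_unique)
      qed simp
      also have "\<dots> = (\<Sum>k<CARD('p). (of_nat k :: 'p F) ^ (CARD('p) - 2))"
        using p3 by (simp add: sum_split0)
      also have "\<dots> = 0" using p3 by (intro F_powsum) simp
      finally show ?thesis .
    qed
    have "(\<Sum>k\<in>{1..CARD('p)-1}. inverse (of_nat k) * coeff (Mp k :: 'p F poly) j) = (\<Sum>k\<in>{1..CARD('p)-1}. inverse (of_nat k) * V)"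
    proof (rule sum.cong)
      fix k assume k: "k \<in> {1..CARD('p)-1}"
      have "coeff (Mp k :: 'p F poly) 0 = fb (of_nat k * aa - 1) (CARD('p) - 1)" using p3 by (simp add: coeff_Mp mco_def)
      with fbk[OF k] 1 show "inverse (of_nat k) * coeff (Mp k :: 'p F poly) j = inverse (of_nat k) * V" by simp
    qed simp
    also have "\<dots> = 0" using inv_sum by (simp flip: sum_distrib_right)
    finally show ?thesis using 1 cs by simp
  next
    case 2
    define n where "n = CARD('p) - 1 - j"
    define W where "W = (monom 1 (j - 1) * smult (inverse (of_nat (fact n))) (\<Prod>i<n. [:- 1 - of_nat i, aa:]) :: 'p F poly)"
    have pW: "poly W x = x ^ (j - 1) * fb (x * aa - 1) n" for x
      by (simp add: W_def poly_monom poly_prod fb_def algebra_simps)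
    have dW: "degree W < CARD('p) - 1"
    proof -
      have "degree (\<Prod>i<n. [:- 1 - of_nat i, aa:] :: 'p F poly) \<le> (\<Sum>i<n. degree ([:- 1 - of_nat i, aa:] :: 'p F poly))"
        using degree_prod_sum_le[of "{..<n}" "\<lambda>i. [:- 1 - of_nat i, aa:] :: 'p F poly"] by (simp add: o_def)
      also have "\<dots> = n" using aa_ne0[where 'a='p] by simp
      finally have dP: "degree (\<Prod>i<n. [:- 1 - of_nat i, aa:] :: 'p F poly) \<le> n" .
      have d1: "degree (monom (1::'p F) (j - 1)) \<le> j - 1" by (rule degree_monom_le)
      have d2: "degree (smult (inverse (of_nat (fact n))) (\<Prod>i<n. [:- 1 - of_nat i, aa:]) :: 'p F poly) \<le> n"
        using degree_smult_le[of "inverse (of_nat (fact n)) :: 'p F" "\<Prod>i<n. [:- 1 - of_nat i, aa:]"] dP by linarith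
      have "degree W \<le> degree (monom (1::'p F) (j - 1)) + degree (smult (inverse (of_nat (fact n))) (\<Prod>i<n. [:- 1 - of_nat i, aa:]) :: 'p F poly)"
        unfolding W_def by (rule degree_mult_le)
      then have "degree W \<le> j - 1 + n" using d1 d2 by linarith
      then show ?thesis using 2 p3 unfolding n_def by arith
    qed
    have cj: "inverse (of_nat k) * coeff (Mp k :: 'p F poly) j = ((-1) ^ j * inverse (of_nat (fact j))) * poly W (of_nat k)"
      if k: "k \<in> {1..CARD('p)-1}" for k
    proof -
      have k0: "(of_nat k :: 'p F) \<noteq> 0" by (rule knz[OF k])
      have jj: "j = Suc (j - 1)" using 2 by simp
      have pm: "(- of_nat k :: 'p F) ^ j = (-1) ^ j * (of_nat k * of_nat k ^ (j - 1))"
        by (metis jj power_minus power_Suc)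
      have ikj: "inverse (of_nat k) * (- of_nat k :: 'p F) ^ j = (-1) ^ j * of_nat k ^ (j - 1)"
        unfolding pm by (rule inv_cancel[OF k0])
      have "inverse (of_nat k) * coeff (Mp k :: 'p F poly) j = (inverse (of_nat k) * (- of_nat k) ^ j) * inverse (of_nat (fact j)) * fb (of_nat k * aa - 1) n"
        using 2 by (simp add: coeff_Mp mco_def n_def mult_ac)
      also have "\<dots> = ((-1) ^ j * inverse (of_nat (fact j))) * poly W (of_nat k)"
        unfolding pW ikj by (simp only: mult_ac)
      finally show ?thesis .
    qed
    have "(\<Sum>k\<in>{1..CARD('p)-1}. inverse (of_nat k) * coeff (Mp k :: 'p F poly) j) = ((-1) ^ j * inverse (of_nat (fact j))) * (\<Sum>k\<in>{1..CARD('p)-1}. poly W (of_nat k))"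
      unfolding sum_distrib_left by (rule sum.cong) (simp_all add: cj)
    also have "(\<Sum>k\<in>{1..CARD('p)-1}. poly W (of_nat k)) = - poly W 0"
    proof -
      have "(\<Sum>k<CARD('p). poly W (of_nat k :: 'p F)) = 0" by (rule F_poly_sum[OF dW])
      then have h: "poly W 0 + (\<Sum>k\<in>{1..CARD('p)-1}. poly W (of_nat k)) = 0" by (simp add: sum_split0)
      then show ?thesis by (simp add: eq_neg_iff_add_eq_0 add.commute)
    qed
    finally have eq: "(\<Sum>k\<in>{1..CARD('p)-1}. inverse (of_nat k) * coeff (Mp k :: 'p F poly) j) = ((-1) ^ j * inverse (of_nat (fact j))) * - poly W 0" .
    have pW0: "poly W 0 = (if j = 1 then -1 else 0)"
    proof (cases "j = 1")
      case True
      have nl: "n < CARD('p)" by (simp add: n_def)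
      have on: "odd n" using odd True p3 by (simp add: n_def)
      have "fb (-1 :: 'p F) n = (-1) ^ n" by (rule fb_neg1[OF fact_ne0_F[OF nl]])
      then show ?thesis using True on pW[of 0] by simp
    next
      case False
      then have "j - 1 \<noteq> 0" using 2 by simp
      then show ?thesis using False pW[of 0] by simp
    qed
    show ?thesis
    proof (cases "j = 1")
      case True then show ?thesis using cs eq pW0 by simp
    next
      case False
      then have "coeff (- [:0, 1:] :: 'p F poly) j = 0" using 2 by (cases j) (auto simp: coeff_pCons')
      then show ?thesis using cs eq pW0 False by simp
    qed
  next
    case 3
    have "coeff (- [:0, 1:] :: 'p F poly) j = 0" using 3 p3 by (simp add: coeff_eq_0)
    then show ?thesis using 3 cs by (simp add: coeff_Mp)
  qed
qed

lemma pcompose_monom: "pcompose (monom c k) L = smult c (L ^ k)"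
  by (induction k) (simp_all add: monom_0 monom_Suc pcompose_pCons algebra_simps)

lemma Gpoly_alt: "Gpoly CARD('p) = - (\<Sum>k\<in>{1..CARD('p)-1}. monom (inverse (of_nat k) * inverse (ee k)) k :: 'p::prime_card F poly)"
  unfolding Gpoly_def ee_def ..

lemma degree_Gpoly: "degree (Gpoly CARD('p) :: 'p::prime_card F poly) < CARD('p)"
proof -
  have "degree (Gpoly CARD('p) :: 'p F poly) \<le> CARD('p) - 1"
    by (rule degree_le) (auto simp: Gpoly_def coeff_sum coeff_monom)
  then show ?thesis using card_ge2[where 'p='p] by linarith
qed

lemma exist:
  assumes odd: "odd CARD('p::prime_card)"
  shows "NN dvd (pcompose (Gpoly CARD('p)) (Mp 1) - [:0, 1:] :: 'p F poly)"
proof -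
  let ?A = "{1..CARD('p)-1}"
  have ee0: "ee k \<noteq> (0 :: 'p F)" if k: "k \<in> ?A" for k
  proof -
    have "\<forall>s\<in>{1..k-1}. to_fract (bpoly CARD('p) 1 s) \<noteq> (0::'p F)"
    proof
      fix s assume s: "s \<in> {1..k-1}"
      then have s1: "1 \<le> s" and s2: "Suc s < CARD('p)" using k by auto
      show "to_fract (bpoly CARD('p) 1 s) \<noteq> (0::'p F)" using bpoly_ne0[OF odd s1 s2] by simp
    qed
    then show ?thesis by (simp add: ee_def prod_zero_iff)
  qed
  have g: "pcompose (Gpoly CARD('p)) (Mp 1) = - (\<Sum>k\<in>?A. smult (inverse (of_nat k) * inverse (ee k)) ((Mp 1) ^ k) :: 'p F poly)"
    by (simp add: Gpoly_alt pcompose_sum pcompose_uminus pcompose_monom)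
  have x: "[:0, 1:] = - (\<Sum>k\<in>?A. smult (inverse (of_nat k)) (Mp k) :: 'p F poly)"
    using sum_Mp[OF odd] by simp
  have s: "(\<Sum>k\<in>?A. smult (inverse (of_nat k) * inverse (ee k)) ((Mp 1) ^ k - smult (ee k) (Mp k)) :: 'p F poly)
     = (\<Sum>k\<in>?A. smult (inverse (of_nat k) * inverse (ee k)) ((Mp 1) ^ k)) - (\<Sum>k\<in>?A. smult (inverse (of_nat k)) (Mp k))"
    unfolding sum_subtractf[symmetric] by (rule sum.cong) (auto simp: smult_diff_right ee0 mult.assoc)
  have key: "pcompose (Gpoly CARD('p)) (Mp 1) - [:0, 1:] = - (\<Sum>k\<in>?A. smult (inverse (of_nat k) * inverse (ee k)) ((Mp 1) ^ k - smult (ee k) (Mp k)) :: 'p F poly)"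
    unfolding g s by (subst x) simp
  show ?thesis unfolding key dvd_minus_iff by (intro dvd_sum dvd_smult pow_step[OF odd]) auto
qed

lemma NN_dvd_pderiv: "NN dvd f \<Longrightarrow> NN dvd pderiv (f :: 'p::prime_card F poly)"
proof -
  assume "NN dvd f"
  then obtain k where "f = NN * k" unfolding dvd_def by blast
  then have "pderiv f = NN * pderiv k" by (simp add: pderiv_mult pderiv_NN)
  then show ?thesis by (rule dvdI)
qed

lemma uniq:
  assumes odd: "odd CARD('p::prime_card)"
  shows "degree D < CARD('p) \<Longrightarrow> NN dvd pcompose D (Mp 1) \<Longrightarrow> D = (0 :: 'p F poly)"
proof (induction "degree D" arbitrary: D rule: less_induct)
  case less
  define L where "L = (Mp 1 :: 'p F poly)"
  define G0 where "G0 = (Gpoly CARD('p) :: 'p F poly)"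
  have ex: "NN dvd pcompose G0 L - [:0, 1:]" unfolding L_def G0_def by (rule exist[OF odd])
  have H: "NN dvd pcompose (pderiv G0) L * pderiv L - 1"
    using NN_dvd_pderiv[OF ex] by (simp add: pderiv_diff pderiv_pcompose pderiv_pCons flip: one_pCons)
  show "D = 0"
  proof (cases "degree D = 0")
    case True
    then obtain c where D: "D = [:c:]" by (metis degree_eq_zeroE)
    have dc: "NN dvd [:c:]" using less.prems(2) D by simp
    show ?thesis
    proof (rule ccontr)
      assume "D \<noteq> 0"
      then have "[:c:] \<noteq> 0" using D by simp
      from dvd_imp_degree_le[OF dc this] have "degree (NN :: 'p F poly) \<le> 0" by simp
      then show False using degree_NN[where 'p='p] card_ge2[where 'p='p] by simp
    qed
  next
    case False
    define D' where "D' = pderiv D"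
    have dD': "degree D' < degree D"
    proof -
      have "degree D' \<le> degree D - 1"
        by (rule degree_le) (auto simp: D'_def coeff_pderiv intro!: coeff_eq_0)
      then show ?thesis using False by linarith
    qed
    have D'ne: "D' \<noteq> 0"
    proof
      assume "D' = 0"
      then have "coeff D' (degree D - 1) = 0" by simp
      moreover have "coeff D' (degree D - 1) = of_nat (degree D) * lead_coeff D"
        using False by (simp add: D'_def coeff_pderiv)
      moreover have "(of_nat (degree D) :: 'p F) \<noteq> 0" using False less.prems(1) by (auto simp: ofnat_F_eq_0 dest: dvd_imp_le)
      moreover have "lead_coeff D \<noteq> 0" using False by auto
      ultimately show False by simp
    qed
    have "NN dvd pderiv (pcompose D L)" using NN_dvd_pderiv less.prems(2) L_def by simp
    then have h1: "NN dvd pcompose D' L * pderiv L" by (simp add: pderiv_pcompose D'_def)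
    have "NN dvd pcompose D' L * (pcompose (pderiv G0) L * pderiv L - 1)" using H by (rule dvd_mult)
    then have h2: "NN dvd pcompose D' L * pderiv L * pcompose (pderiv G0) L - pcompose D' L" by (simp add: algebra_simps)
    have h3: "NN dvd pcompose D' L * pderiv L * pcompose (pderiv G0) L" using h1 by (rule dvd_mult2)
    have "NN dvd pcompose D' L * pderiv L * pcompose (pderiv G0) L - (pcompose D' L * pderiv L * pcompose (pderiv G0) L - pcompose D' L)"
      using h3 h2 by (rule dvd_diff)
    then have "NN dvd pcompose D' (Mp 1)" by (simp add: L_def)
    moreover have "degree D' < CARD('p)" using dD' less.prems(1) by simp
    ultimately have "D' = 0" using less.hyps[OF dD'] by simp
    with D'ne show ?thesis by simp
  qed
qed

theorem theorem2:
  fixes G :: "('p::prime_card mod_ring poly) fract poly"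
  assumes "odd CARD('p)"
  shows "(degree G < CARD('p) \<and>
          (monom 1 CARD('p) - [: to_fract (alpha ^ CARD('p) - alpha) :]) dvd
            (pcompose G (laguerre CARD('p)) - [:0, 1:]))
         \<longleftrightarrow> G = Gpoly CARD('p)"
proof -
  have N: "(monom 1 CARD('p) - [: to_fract (alpha ^ CARD('p) - alpha) :]) = (NN :: 'p F poly)" by (simp add: NN_def aa_def)
  have L: "laguerre CARD('p) = (Mp 1 :: 'p F poly)" by (rule lag_Mp)
  show ?thesis unfolding N L
  proof
    assume h: "degree G < CARD('p) \<and> NN dvd pcompose G (Mp 1) - [:0, 1:]"
    define D where "D = G - Gpoly CARD('p)"
    have "degree D < CARD('p)" unfolding D_def using h degree_Gpoly[where 'p='p] by (intro degree_diff_less) auto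
    moreover have "NN dvd pcompose D (Mp 1)"
    proof -
      have eq: "pcompose D (Mp 1) = (pcompose G (Mp 1) - [:0,1:]) - (pcompose (Gpoly CARD('p)) (Mp 1) - [:0,1:])"
        by (simp add: D_def pcompose_diff)
      have "NN dvd (pcompose G (Mp 1) - [:0,1:]) - (pcompose (Gpoly CARD('p)) (Mp 1) - [:0,1:])"
        by (rule dvd_diff) (use h exist[OF assms] in auto)
      then show ?thesis unfolding eq .
    qed
    ultimately have "D = 0" by (rule uniq[OF assms])
    then show "G = Gpoly CARD('p)" by (simp add: D_def)
  next
    assume "G = Gpoly CARD('p)"
    then show "degree G < CARD('p) \<and> NN dvd pcompose G (Mp 1) - [:0, 1:]" using degree_Gpoly[where 'p='p] exist[OF assms] by simp
  qed
qed

end
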